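(* For every real number $x$, \[ \arctan(x)=-2\sum_{m=1}^{\infty}\sum_{n=1}^{2m-1}\frac{(-1)^{n}}{(2m-1)\left(1+x^{2}/4\right)^{2m-1}}\left(\frac{x}{2}\right)^{2(2m-n)-1}\binom{2m-1}{2n-1}. \] *)

theory Defs
  imports "HOL-Analysis.Analysis"
begin

end

theory Submission
  imports Defs
begin

lemma imA:
  fixes y :: real and k :: nat
  shows "Im ((complex_of_real y + \<i>)^k) = (\<Sum>p<k. real (k choose (2*p+1)) * y^(k-2*p-1) * (-1)^p)"
proof -
  define g where "g j = real (k choose j) * y^(k-j) * Im (\<i>^j)" for j
  have "(complex_of_real y + \<i>)^k = (\<Sum>j\<le>k. of_nat (k choose j) * \<i>^j * complex_of_real y^(k-j))"
    using binomial_ring[of "\<i>" "complex_of_real y" k] by (simp add: add.commute)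
  hence "Im ((complex_of_real y + \<i>)^k) = (\<Sum>j\<le>k. g j)"
    by (simp add: Im_sum g_def mult.commute mult.left_commute flip: of_real_power)
  also have "\<dots> = (\<Sum>j<2*(k+1). g j)"
    by (rule sum.mono_neutral_left) (auto simp: g_def)
  also have "\<dots> = (\<Sum>p<k+1. g (2*p)) + (\<Sum>p<k+1. g (2*p+1))"
    using sum_split_even_odd[where n="k+1" and f=g and g=g] by simp
  also have "(\<Sum>p<k+1. g (2*p)) = 0"
    by (simp add: g_def power_mult)
  also have "(\<Sum>p<k+1. g (2*p+1)) = (\<Sum>p<k. real (k choose (2*p+1)) * y^(k-2*p-1) * (-1)^p)"
    by (simp add: g_def power_mult)
  finally show ?thesis by simp
qed

lemma hlp: "a \<noteq> 0 \<Longrightarrow> (b/a)^2 * a = b^2/(a::real)"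
  by (simp add: power2_eq_square field_simps)

lemma gneg: "-((-a - b)/(c::real)) = (2*(A*B) + 2*(C*D))/c" if "a = 2*(C*D)" "b = 2*(A*B)"
  using that by (simp add: minus_divide_left)

lemma alg0: "\<And>q K D Y B A::real. (-q) / (K*D) * (Y*B) * A = -(Y/D) * (A*B*q)/K"
  by (simp add: algebra_simps)

lemma inner:
  fixes y :: real and k :: nat
  assumes "k > 0"
  shows "(\<Sum>n=1..k. (-1) ^ n / (real k * (1 + y^2) ^ k) * y ^ (2*(k+1-n)-1) * real (k choose (2*n-1)))
     = - (y^k / (1+y^2)^k) * Im ((complex_of_real y + \<i>)^k) / real k"
proof -
  have "(\<Sum>n=1..k. (-1) ^ n / (real k * (1 + y^2) ^ k) * y ^ (2*(k+1-n)-1) * real (k choose (2*n-1)))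
     = (\<Sum>p<k. (-1) ^ Suc p / (real k * (1 + y^2) ^ k) * y ^ (2*(k+1-Suc p)-1) * real (k choose (2*Suc p-1)))"
  proof -
    have "{1..k} = {Suc 0..k}" by simp
    thus ?thesis by (simp only: sum.atLeast1_atMost_eq)
  qed
  also have "\<dots> = (\<Sum>p<k. - (y^k / (1+y^2)^k) * (real (k choose (2*p+1)) * y^(k-2*p-1) * (-1)^p) / real k)"
  proof (rule sum.cong[OF refl])
    fix p assume "p \<in> {..<k}"
    show "(-1) ^ Suc p / (real k * (1 + y^2) ^ k) * y ^ (2*(k+1-Suc p)-1) * real (k choose (2*Suc p-1))
        = - (y^k / (1+y^2)^k) * (real (k choose (2*p+1)) * y^(k-2*p-1) * (-1)^p) / real k"
    proof (cases "2*p+1 \<le> k")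
      case True
      hence pw: "y ^ (2*(k+1-Suc p)-1) = y^k * y^(k-2*p-1)"
        by (simp flip: power_add) (rule arg_cong[where f="\<lambda>e. y^e"], linarith)
      have e: "2*Suc p - 1 = 2*p+1" by simp
      have alg: "\<And>q K D Y B A::real. (-q) / (K*D) * (Y*B) * A = -(Y/D) * (A*B*q)/K"
        by (simp add: algebra_simps)
      show ?thesis unfolding pw e power_Suc by (rule trans[OF _ alg]) simp
    next
      case False
      then show ?thesis by (simp add: binomial_eq_0)
    qed
  qed
  also have "\<dots> = - (y^k / (1+y^2)^k) * (\<Sum>p<k. real (k choose (2*p+1)) * y^(k-2*p-1) * (-1)^p) / real k"
    by (simp add: sum_distrib_left sum_divide_distrib)
  finally show ?thesis by (simp add: imA)
qed


theorem mainTheorem2: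
  fixes x :: real
  shows "arctan x = -2 * (\<Sum>m. (\<Sum>n=1..2*(m+1)-1.
            (-1) ^ n / (real (2*(m+1)-1) * (1 + x^2/4) ^ (2*(m+1)-1))
            * (x/2) ^ (2*(2*(m+1)-n)-1) * real ((2*(m+1)-1) choose (2*n-1))))"
proof -
  define y where "y = x/2"
  define z where "z = complex_of_real (y/(1+y^2)) * (complex_of_real y + \<i>)"
  define T where "T m = (\<Sum>n=1..2*(m+1)-1.
            (-1) ^ n / (real (2*(m+1)-1) * (1 + x^2/4) ^ (2*(m+1)-1))
            * (x/2) ^ (2*(2*(m+1)-n)-1) * real ((2*(m+1)-1) choose (2*n-1)))" for m
  have yy: "1 + x^2/4 = 1 + y^2" by (simp add: y_def power_divide)
  have T: "T m = - Im (z^(2*m+1)) / real (2*m+1)" for m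
  proof -
    have k: "2*(m+1)-1 = 2*m+1" "2*m+1+1 = 2*(m+1)" by simp_all
    have "T m = (\<Sum>n=1..2*m+1. (-1) ^ n / (real (2*m+1) * (1 + y^2) ^ (2*m+1)) * y ^ (2*(2*m+1+1-n)-1) * real ((2*m+1) choose (2*n-1)))"
      unfolding T_def yy k(1) y_def k(2) ..
    also have "\<dots> = - (y^(2*m+1) / (1+y^2)^(2*m+1)) * Im ((complex_of_real y + \<i>)^(2*m+1)) / real (2*m+1)"
      by (rule inner) simp
    also have "\<dots> = - Im (z^(2*m+1)) / real (2*m+1)"
      unfolding z_def power_mult_distrib by (simp add: power_divide flip: of_real_power)
    finally show ?thesis .
  qed
  have p1: "1 + y^2 > 0" by (simp add: add_pos_nonneg)
  have "norm (complex_of_real y + \<i>) ^2 = y^2+1" by (simp add: cmod_power2)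
  hence "norm z ^2 = (y/(1+y^2))^2 * (y^2+1)"
    by (simp only: z_def norm_mult power_mult_distrib norm_of_real power2_abs)
  also have "\<dots> = y^2/(1+y^2)" using p1 hlp[of "1+y^2" y] by (simp add: add.commute)
  also have "\<dots> < 1" using p1 by simp
  finally have nz: "norm z < 1" by (simp add: power_less_one_iff abs_square_less_1)
  have "norm (\<i>*z) < 1" using nz by (simp add: norm_mult)
  from Arctan_series(2)[OF this]
  have "(\<lambda>m. (-1)^m / of_nat (2*m+1) * (\<i>*z)^(2*m+1)) sums Arctan (\<i>*z)" by simp
  hence "(\<lambda>m. -2 * ((-1)^m / of_nat (2*m+1) * (\<i>*z)^(2*m+1))) sums (-2 * Arctan (\<i>*z))"
    by (rule sums_mult)
  hence "(\<lambda>m. Re (-2 * ((-1)^m / of_nat (2*m+1) * (\<i>*z)^(2*m+1)))) sums Re (-2 * Arctan (\<i>*z))"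
    by (simp add: sums_complex_iff)
  moreover have "Re (-2 * ((-1)^m / of_nat (2*m+1) * (\<i>*z)^(2*m+1))) = -2 * T m" for m
  proof -
    have i1: "\<i>^(2*m+1) = \<i> * (-1)^m" by (simp add: power_mult)
    have "(\<i>*z)^(2*m+1) = \<i> * (-1)^m * z^(2*m+1)"
      by (simp only: power_mult_distrib i1)
    have sq: "(-1::complex)^m * (-1)^m = 1" by (simp flip: power_add)
    have gen: "\<And>a n w::complex. a * a = 1 \<Longrightarrow> a / n * (\<i> * a * w) = \<i> * w / n"
      by (simp add: field_simps)
    have hh: "(-1)^m / of_nat (2*m+1) * (\<i>*z)^(2*m+1) = \<i> * z^(2*m+1) / of_nat (2*m+1)"
      unfolding \<open>(\<i>*z)^(2*m+1) = \<i> * (-1)^m * z^(2*m+1)\<close> by (rule gen[OF sq])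
    show ?thesis unfolding T hh by (simp add: Re_divide_of_nat) (rule gneg; rule refl)
  qed
  ultimately have S: "(\<lambda>m. -2 * T m) sums Re (-2 * Arctan (\<i>*z))" by simp
  have x2: "x = 2*y" by (simp add: y_def)
  have "Re (1 - z) > 0" using p1 by (simp add: z_def field_simps) (simp add: power2_eq_square)
  hence nz1: "1 - z \<noteq> 0" by auto
  have "1 + z = Complex 1 x * (1 - z)"
    using p1 by (simp add: complex_eq_iff z_def x2 field_simps power2_eq_square)
  hence q: "(1 + z)/(1 - z) = Complex 1 x" using nz1 by (simp add: field_simps)
  have "Arctan (\<i>*z) = \<i>/2 * Ln ((1 + z)/(1 - z))"
    by (simp add: Arctan_def)
  hence "-2 * Arctan (\<i>*z) = -2 * (\<i>/2 * Ln (Complex 1 x))" unfolding q by (rule arg_cong)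
  hence "-2 * Arctan (\<i>*z) = - (\<i> * Ln (Complex 1 x))" by simp
  hence "Re (-2 * Arctan (\<i>*z)) = Im (Ln (Complex 1 x))" by simp
  also have "\<dots> = arctan x" by (subst Im_Ln_eq) (auto simp: complex_eq_iff)
  finally have "Re (-2 * Arctan (\<i>*z)) = arctan x" .
  with S have "(\<lambda>m. -2 * T m) sums arctan x" by simp
  hence "arctan x = (\<Sum>m. -2 * T m)" by (simp add: sums_iff)
  also have "\<dots> = -2 * (\<Sum>m. T m)"
  proof -
    have "summable (\<lambda>m. -2 * T m)" using S by (rule sums_summable)
    hence "summable T" by (rule summable_mult_D) simp
    thus ?thesis by (rule suminf_mult)
  qed
  finally show ?thesis unfolding T_def .
qed

end
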